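(* Let $(D_d)_{d\in\mathbb{N}}$ satisfy Property (P), let $(L_d)$ be positive numbers with $\lim_{d\to\infty}L_d\sqrt d=0$, and let $C_d^0(L)=\{f\colon D_d\to\mathbb{R}\mid \|f\|_\infty\le1,\ \operatorname{Lip}(f)\le L_d\}$. Then for every $\varepsilon\in(0,1)$ there is $d(\varepsilon)$ such that $n(\varepsilon,C_d^0(L))=1$ for all $d\ge d(\varepsilon)$.
   Context: Property (P): $(D_d)$ is a sequence of open sets $D_d\subset\mathbb R^d$ with $\lambda_d(D_d)=1$ for which there exist $x_d^*\in D_d$ and $R<\infty$ with $\lim_{d\to\infty}\lambda_d(\{x\in D_d\mid\|x-x_d^*\|_2\ge R\sqrt d\})=0$. $\operatorname{Lip}(f)=\sup_{x\ne y}|f(x)-f(y)|/\|x-y\|_2$. Information complexity $n(\varepsilon,F_d)$: the minimal number $n\ge0$ of function values such that some algorithm $A_{n,d}(f)=\phi_{n,d}(f(x_1),\dots,f(x_n))$ (points $x_j\in D_d$ possibly adaptive, $\phi_{n,d}$ arbitrary; constants if $n=0$) satisfies $\sup_{f\in F_d}|\int_{D_d}f(x)\,dx-A_{n,d}(f)|\le\varepsilon$. *)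

theory Defs
  imports "HOL-Analysis.Analysis"
begin

text \<open>R^d is modelled as the extensional functions {..<d} to UNIV (PiE),
  with Lebesgue measure the finite product of lborel.\<close>

definition Rd :: "nat \<Rightarrow> (nat \<Rightarrow> real) set" where
  "Rd d = ({..<d} \<rightarrow>\<^sub>E (UNIV :: real set))"

definition lebesgue_d :: "nat \<Rightarrow> (nat \<Rightarrow> real) measure" where
  "lebesgue_d d = PiM {..<d} (\<lambda>_. lborel)"

definition enorm :: "nat \<Rightarrow> (nat \<Rightarrow> real) \<Rightarrow> real" where
  "enorm d x = sqrt (\<Sum>i<d. (x i)\<^sup>2)"

definition edist :: "nat \<Rightarrow> (nat \<Rightarrow> real) \<Rightarrow> (nat \<Rightarrow> real) \<Rightarrow> real" where
  "edist d x y = enorm d (\<lambda>i. x i - y i)"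

definition open_d :: "nat \<Rightarrow> (nat \<Rightarrow> real) set \<Rightarrow> bool" where
  "open_d d D \<longleftrightarrow> D \<subseteq> Rd d \<and>
     (\<forall>x\<in>D. \<exists>e>0. \<forall>y\<in>Rd d. edist d x y < e \<longrightarrow> y \<in> D)"

definition property_P :: "(nat \<Rightarrow> (nat \<Rightarrow> real) set) \<Rightarrow> bool" where
  "property_P D \<longleftrightarrow>
     (\<forall>d. open_d d (D d) \<and> measure (lebesgue_d d) (D d) = 1) \<and>
     (\<exists>xs R. (\<forall>d. xs d \<in> D d) \<and>
        (\<lambda>d. measure (lebesgue_d d)
               {x \<in> D d. edist d x (xs d) \<ge> R * sqrt (real d)}) \<longlonglongrightarrow> 0)"

definition C0 :: "nat \<Rightarrow> (nat \<Rightarrow> real) set \<Rightarrow> real \<Rightarrow> ((nat \<Rightarrow> real) \<Rightarrow> real) set" where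
  "C0 d D L = {f. (\<forall>x\<in>D. \<bar>f x\<bar> \<le> 1) \<and>
                  (\<forall>x\<in>D. \<forall>y\<in>D. \<bar>f x - f y\<bar> \<le> L * edist d x y)}"

text \<open>Adaptive information: P j ys is the (j+1)-st node, chosen from the
  previously observed values ys (a list of length j).\<close>
fun info_vals :: "(nat \<Rightarrow> real list \<Rightarrow> 'a) \<Rightarrow> ('a \<Rightarrow> real) \<Rightarrow> nat \<Rightarrow> real list" where
  "info_vals P f 0 = []"
| "info_vals P f (Suc j) = (let ys = info_vals P f j in ys @ [f (P j ys)])"

definition info_compl ::
  "real \<Rightarrow> ((nat \<Rightarrow> real) \<Rightarrow> real) set \<Rightarrow> nat \<Rightarrow> (nat \<Rightarrow> real) set \<Rightarrow> nat" where
  "info_compl \<epsilon> F d D = (LEAST n. \<exists>(P :: nat \<Rightarrow> real list \<Rightarrow> (nat \<Rightarrow> real)) (\<phi> :: real list \<Rightarrow> real).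
      (\<forall>j<n. \<forall>ys. length ys = j \<longrightarrow> P j ys \<in> D) \<and>
      (\<forall>f\<in>F. \<bar>(LINT x:D|lebesgue_d d. f x) - \<phi> (info_vals P f n)\<bar> \<le> \<epsilon>))"

end

theory Submission
  imports Defs
begin

lemma space_ld: "space (lebesgue_d d) = Rd d"
  by (simp add: lebesgue_d_def Rd_def space_PiM)

lemma edist_sym: "edist d x y = edist d y x"
  unfolding edist_def enorm_def by (simp add: power2_commute)

lemma edist_nonneg: "edist d x y \<ge> 0"
  unfolding edist_def enorm_def by (simp add: sum_nonneg)

lemma open_d_sets:
  assumes U: "open_d d U"
  shows "U \<in> sets (lebesgue_d d)"
proof -
  define B where "B = (\<lambda>(q::nat\<Rightarrow>real, r::nat\<Rightarrow>real). PiE {..<d} (\<lambda>i. {q i<..<r i}))"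
  define QV where "QV = PiE {..<d} (\<lambda>_. \<rat> :: real set)"
  define S where "S = {p \<in> QV \<times> QV. B p \<subseteq> U}"
  have cQ: "countable QV" unfolding QV_def by (rule countable_PiE) (auto simp: countable_rat)
  have cS: "countable (B ` S)"
    by (rule countable_image, rule countable_subset[of _ "QV \<times> QV"]) (auto simp: S_def cQ)
  have Bs: "B p \<in> sets (lebesgue_d d)" for p
    unfolding lebesgue_d_def B_def by (cases p) (auto intro!: sets_PiM_I_finite)
  have eq: "U = \<Union>(B ` S)"
  proof
    show "\<Union>(B ` S) \<subseteq> U" by (auto simp: S_def)
  next
    show "U \<subseteq> \<Union>(B ` S)"
    proof
      fix x assume xU: "x \<in> U"
      from U xU obtain e where e: "e > 0" "\<And>y. y \<in> Rd d \<Longrightarrow> edist d x y < e \<Longrightarrow> y \<in> U"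
        unfolding open_d_def by blast
      have xR: "x \<in> Rd d" using U xU unfolding open_d_def by blast
      define \<delta> where "\<delta> = e / (real d + 1)"
      have dpos: "\<delta> > 0" using e by (simp add: \<delta>_def)
      have ex1: "\<exists>t. t \<in> \<rat> \<and> x i - \<delta> < t \<and> t < x i" for i
        using Rats_dense_in_real[of "x i - \<delta>" "x i"] dpos by auto
      have ex2: "\<exists>t. t \<in> \<rat> \<and> x i < t \<and> t < x i + \<delta>" for i
        using Rats_dense_in_real[of "x i" "x i + \<delta>"] dpos by auto
      define q where "q = (\<lambda>i. if i < d then (SOME t. t \<in> \<rat> \<and> x i - \<delta> < t \<and> t < x i) else undefined)"
      define r where "r = (\<lambda>i. if i < d then (SOME t. t \<in> \<rat> \<and> x i < t \<and> t < x i + \<delta>) else undefined)"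
      have q: "i < d \<Longrightarrow> q i \<in> \<rat> \<and> x i - \<delta> < q i \<and> q i < x i" for i
        unfolding q_def using someI_ex[OF ex1[of i]] by simp
      have r: "i < d \<Longrightarrow> r i \<in> \<rat> \<and> x i < r i \<and> r i < x i + \<delta>" for i
        unfolding r_def using someI_ex[OF ex2[of i]] by simp
      have qQ: "q \<in> QV" "r \<in> QV" using q r by (auto simp: QV_def q_def r_def PiE_def extensional_def)
      have sub: "B (q, r) \<subseteq> U"
      proof
        fix y assume y: "y \<in> B (q, r)"
        have yR: "y \<in> Rd d" using y by (auto simp: B_def Rd_def PiE_def)
        have yi: "\<bar>x i - y i\<bar> < \<delta>" if id: "i < d" for i
        proof -
          have "y i \<in> {q i<..<r i}" using y id unfolding B_def by (simp add: PiE_iff)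
          hence "q i < y i" "y i < r i" by auto
          thus ?thesis using q[OF id] r[OF id] unfolding abs_less_iff by linarith
        qed
        have "(\<Sum>i<d. (x i - y i)\<^sup>2) \<le> (\<Sum>i<d. \<delta>\<^sup>2)"
        proof (rule sum_mono)
          fix i assume "i \<in> {..<d}"
          hence "\<bar>x i - y i\<bar> \<le> \<delta>" using yi[of i] by auto
          thus "(x i - y i)\<^sup>2 \<le> \<delta>\<^sup>2"
            by (metis abs_ge_zero power2_abs power_mono)
        qed
        also have "\<dots> = real d * \<delta>\<^sup>2" by simp
        also have "\<dots> < e\<^sup>2"
        proof -
          have "real d * \<delta>\<^sup>2 = e\<^sup>2 * (real d / (real d + 1)^2)"
            by (simp add: \<delta>_def power_divide)
          also have "\<dots> < e\<^sup>2 * 1"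
          proof (rule mult_strict_left_mono)
            have "real d < (real d + 1)^2" by (simp add: power2_eq_square algebra_simps)
              (smt (verit) of_nat_0_le_iff mult_nonneg_nonneg)
            thus "real d / (real d + 1)^2 < 1" by simp
          qed (use e in auto)
          finally show ?thesis by simp
        qed
        finally have "edist d x y < e"
          unfolding edist_def enorm_def using e
          by (metis abs_of_pos real_sqrt_abs real_sqrt_less_mono)
        thus "y \<in> U" using e(2) yR by blast
      qed
      have "x \<in> B (q, r)" using xR q r by (auto simp: B_def Rd_def)
      thus "x \<in> \<Union>(B ` S)" using sub qQ by (auto simp: S_def)
    qed
  qed
  show ?thesis unfolding eq by (rule sets.countable_Union[OF cS]) (use Bs in auto)
qed


lemma lip_meas:
  assumes D: "open_d d D" and Lp: "L > 0"
    and lip: "\<forall>x\<in>D. \<forall>y\<in>D. \<bar>f x - f y\<bar> \<le> L * edist d x y"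
  shows "(\<lambda>x. indicator D x * f x) \<in> borel_measurable (lebesgue_d d)"
proof (subst borel_measurable_iff_less, intro allI)
  fix a :: real
  have DR: "D \<subseteq> Rd d" using D by (simp add: open_d_def)
  have op: "open_d d {x \<in> D. f x < a}"
    unfolding open_d_def
  proof (intro conjI ballI)
    show "{x \<in> D. f x < a} \<subseteq> Rd d" using DR by auto
  next
    fix x assume x: "x \<in> {x \<in> D. f x < a}"
    from D x obtain e where e: "e > 0" "\<And>y. y \<in> Rd d \<Longrightarrow> edist d x y < e \<Longrightarrow> y \<in> D"
      unfolding open_d_def by blast
    define e' where "e' = min e ((a - f x) / L)"
    have "e' > 0" using e x Lp by (auto simp: e'_def)
    moreover have "y \<in> {x \<in> D. f x < a}" if "y \<in> Rd d" "edist d x y < e'" for y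
    proof -
      have yD: "y \<in> D" using e that by (auto simp: e'_def)
      have "f y - f x \<le> L * edist d x y" using lip x yD edist_sym[of d y x] abs_le_iff
        by (metis (mono_tags, lifting) mem_Collect_eq)
      also have "\<dots> < L * ((a - f x) / L)"
        using that Lp by (intro mult_strict_left_mono) (auto simp: e'_def)
      also have "\<dots> = a - f x" using Lp by simp
      finally show ?thesis using yD by simp
    qed
    ultimately show "\<exists>e>0. \<forall>y\<in>Rd d. edist d x y < e \<longrightarrow> y \<in> {x \<in> D. f x < a}" by blast
  qed
  have eq: "{w \<in> space (lebesgue_d d). indicator D w * f w < a} =
     {x \<in> D. f x < a} \<union> (if 0 < a then space (lebesgue_d d) - D else {})"
    using DR by (auto simp: space_ld indicator_def)
  show "{w \<in> space (lebesgue_d d). indicator D w * f w < a} \<in> sets (lebesgue_d d)"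
    unfolding eq using open_d_sets[OF op] open_d_sets[OF D] by auto
qed


lemma one_pt:
  fixes L R \<epsilon> :: real
  assumes Dop: "open_d d D" and D1: "measure (lebesgue_d d) D = 1" and x0: "x0 \<in> D"
    and Lp: "L > 0" and e0: "0 < \<epsilon>" and e1: "\<epsilon> < 1"
    and small: "2 * measure (lebesgue_d d) {x\<in>D. R * sqrt (real d) \<le> edist d x x0}
                 + \<bar>R\<bar> * (L * sqrt (real d)) < \<epsilon>"
  shows "info_compl \<epsilon> (C0 d D L) d D = 1"
proof -
  define M where "M = lebesgue_d d"
  have DS: "D \<subseteq> space M" using Dop by (auto simp: open_d_def M_def space_ld)
  have Dsets: "D \<in> sets M" using D1 measure_notin_sets[of D M] by (auto simp: M_def)
  have Dfin: "emeasure M D < \<infinity>"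
  proof (rule ccontr)
    assume "\<not> emeasure M D < \<infinity>"
    hence "emeasure M D = \<infinity>" by (simp add: less_top[symmetric])
    hence "measure M D = 0" by (simp add: measure_def)
    thus False using D1 by (simp add: M_def)
  qed
  have intD: "integrable M (indicator D :: _ \<Rightarrow> real)"
    by (rule integrable_real_indicator[OF Dsets Dfin])
  have intDc: "integral\<^sup>L M (indicator D :: _ \<Rightarrow> real) = 1"
    using DS D1 by (simp add: Int_absorb2 M_def)
  have C0int: "integrable M (\<lambda>x. indicator D x * f x)" if f: "f \<in> C0 d D L" for f
  proof (rule Bochner_Integration.integrable_bound[OF intD])
    show "(\<lambda>x. indicator D x * f x) \<in> borel_measurable M"
      unfolding M_def by (rule lip_meas[OF Dop Lp]) (use f in \<open>auto simp: C0_def\<close>)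
    show "AE x in M. norm (indicator D x * f x) \<le> norm (indicator D x :: real)"
      using f by (intro AE_I2) (auto simp: C0_def indicator_def)
  qed
  have meas_e: "(\<lambda>x. edist d x x0) \<in> borel_measurable M"
    unfolding edist_def enorm_def M_def lebesgue_d_def by measurable
  define A where "A = {x\<in>D. R * sqrt (real d) \<le> edist d x x0}"
  have "{x\<in>space M. R * sqrt (real d) \<le> edist d x x0} \<in> sets M"
    using meas_e unfolding borel_measurable_iff_ge by blast
  hence Asets: "A \<in> sets M"
  proof -
    assume h: "{x\<in>space M. R * sqrt (real d) \<le> edist d x x0} \<in> sets M"
    have "A = D \<inter> {x\<in>space M. R * sqrt (real d) \<le> edist d x x0}"
      using DS unfolding A_def by blast
    thus ?thesis using sets.Int[OF Dsets h] by simp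
  qed
  have AD: "A \<subseteq> D" unfolding A_def by blast
  have Afin: "emeasure M A < \<infinity>"
    using emeasure_mono[OF AD Dsets] Dfin by (rule order.strict_trans1)
  have intA: "integrable M (indicator A :: _ \<Rightarrow> real)"
    by (rule integrable_real_indicator[OF Asets Afin])
  have AS: "A \<inter> space M = A" using AD DS by blast
  have intAc: "integral\<^sup>L M (indicator A :: _ \<Rightarrow> real) = measure M A"
    by (simp only: Bochner_Integration.integral_indicator AS)
  define c where "c = \<bar>R\<bar> * (L * sqrt (real d))"
  have c0: "c \<ge> 0" using Lp by (simp add: c_def)
  have est: "\<bar>(LINT x:D|M. f x) - f x0\<bar> \<le> \<epsilon>" if f: "f \<in> C0 d D L" for f
  proof -
    have fb: "\<And>x. x \<in> D \<Longrightarrow> \<bar>f x\<bar> \<le> 1" and fl: "\<And>x y. x \<in> D \<Longrightarrow> y \<in> D \<Longrightarrow> \<bar>f x - f y\<bar> \<le> L * edist d x y"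
      using f by (auto simp: C0_def)
    have i1: "integrable M (\<lambda>x. indicator D x * f x)" by (rule C0int[OF f])
    have i2: "integrable M (\<lambda>x. indicator D x * f x0)" using intD by auto
    have e1': "(LINT x:D|M. f x) = integral\<^sup>L M (\<lambda>x. indicator D x * f x)"
      by (simp add: set_lebesgue_integral_def)
    have e2: "f x0 = integral\<^sup>L M (\<lambda>x. indicator D x * f x0)"
      by (simp only: integral_mult_left_zero intDc mult_1)
    define H where "H = (\<lambda>x. indicator D x * f x - indicator D x * f x0)"
    have "(LINT x:D|M. f x) - f x0 = integral\<^sup>L M H"
      unfolding e1' H_def by (subst e2) (simp add: Bochner_Integration.integral_diff[OF i1 i2])
    hence "\<bar>(LINT x:D|M. f x) - f x0\<bar> \<le> integral\<^sup>L M (\<lambda>x. \<bar>H x\<bar>)"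
      using integral_abs_bound by metis
    also have "\<dots> \<le> integral\<^sup>L M (\<lambda>x. 2 * indicator A x + c * indicator D x)"
    proof (rule integral_mono)
      show "integrable M (\<lambda>x. \<bar>H x\<bar>)" unfolding H_def using i1 i2 by auto
      show "integrable M (\<lambda>x. 2 * indicator A x + c * indicator D x :: real)" using intA intD by auto
      fix x assume "x \<in> space M"
      show "\<bar>H x\<bar> \<le> 2 * indicator A x + c * indicator D x"
      proof (cases "x \<in> D")
        case False thus ?thesis using c0 by (simp add: H_def indicator_def)
      next
        case xD: True
        show ?thesis
        proof (cases "x \<in> A")
          case True
          have "\<bar>f x - f x0\<bar> \<le> 2" using fb[OF xD] fb[OF x0] by linarith
          thus ?thesis using True xD c0 by (simp add: H_def indicator_def)
        next
          case False
          hence lt: "edist d x x0 < R * sqrt (real d)" using xD by (auto simp: A_def)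
          have "\<bar>f x - f x0\<bar> \<le> L * edist d x x0" by (rule fl[OF xD x0])
          also have "\<dots> \<le> L * (\<bar>R\<bar> * sqrt (real d))"
          proof -
            have "R * sqrt (real d) \<le> \<bar>R\<bar> * sqrt (real d)" by (intro mult_right_mono) auto
            thus ?thesis using lt Lp by (intro mult_left_mono) auto
          qed
          also have "\<dots> = c" by (simp add: c_def)
          finally show ?thesis using False xD by (simp add: H_def indicator_def)
        qed
      qed
    qed
    also have "\<dots> = 2 * measure M A + c"
      using intA intD DS AS D1 by (simp add: Int_absorb2 M_def)
    also have "\<dots> < \<epsilon>" using small by (simp add: M_def A_def c_def)
    finally show ?thesis by simp
  qed
  show ?thesis
    unfolding info_compl_def
  proof (rule Least_equality)
    show "\<exists>(P :: nat \<Rightarrow> real list \<Rightarrow> (nat \<Rightarrow> real)) \<phi>. (\<forall>j<1. \<forall>ys. length ys = j \<longrightarrow> P j ys \<in> D) \<and>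
      (\<forall>f\<in>C0 d D L. \<bar>(LINT x:D|lebesgue_d d. f x) - \<phi> (info_vals P f 1)\<bar> \<le> \<epsilon>)"
      by (rule exI[of _ "\<lambda>j ys. x0"], rule exI[of _ "\<lambda>ys. hd ys"])
         (use x0 est in \<open>simp add: M_def\<close>)
  next
    fix n assume "\<exists>(P :: nat \<Rightarrow> real list \<Rightarrow> (nat \<Rightarrow> real)) \<phi>. (\<forall>j<n. \<forall>ys. length ys = j \<longrightarrow> P j ys \<in> D) \<and>
      (\<forall>f\<in>C0 d D L. \<bar>(LINT x:D|lebesgue_d d. f x) - \<phi> (info_vals P f n)\<bar> \<le> \<epsilon>)"
    then obtain P \<phi> where Pp: "\<forall>f\<in>C0 d D L. \<bar>(LINT x:D|M. f x) - \<phi> (info_vals P f n)\<bar> \<le> \<epsilon>"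
      by (auto simp: M_def)
    show "1 \<le> n"
    proof (rule ccontr)
      assume "\<not> 1 \<le> n"
      hence n0: "n = 0" by simp
      have c1: "(\<lambda>_. 1) \<in> C0 d D L" "(\<lambda>_. -1) \<in> C0 d D L"
        using Lp edist_nonneg by (auto simp: C0_def)
      have "(LINT x:D|M. (1::real)) = 1" using intDc by (simp add: set_lebesgue_integral_def)
      moreover have "(LINT x:D|M. (-1::real)) = -1" using intDc by (simp add: set_lebesgue_integral_def)
      ultimately have "\<bar>1 - \<phi> []\<bar> \<le> \<epsilon>" "\<bar>-1 - \<phi> []\<bar> \<le> \<epsilon>"
        using Pp c1 n0 by force+
      thus False using e1 by linarith
    qed
  qed
qed


theorem proposition3p3:
  fixes D :: "nat \<Rightarrow> (nat \<Rightarrow> real) set" and L :: "nat \<Rightarrow> real"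
  assumes "property_P D"
    and "\<And>d. L d > 0"
    and "(\<lambda>d. L d * sqrt (real d)) \<longlonglongrightarrow> 0"
  shows "\<forall>\<epsilon>. 0 < \<epsilon> \<and> \<epsilon> < 1 \<longrightarrow>
           (\<exists>d0. \<forall>d\<ge>d0. info_compl \<epsilon> (C0 d (D d) (L d)) d (D d) = 1)"
proof (intro allI impI)
  fix \<epsilon> :: real assume e: "0 < \<epsilon> \<and> \<epsilon> < 1"
  have D: "\<And>d. open_d d (D d) \<and> measure (lebesgue_d d) (D d) = 1" using assms(1)
    unfolding property_P_def by blast
  obtain xs R where xs: "\<And>d. xs d \<in> D d"
    and lim: "(\<lambda>d. measure (lebesgue_d d)
               {x \<in> D d. edist d x (xs d) \<ge> R * sqrt (real d)}) \<longlonglongrightarrow> 0"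
    using assms(1) unfolding property_P_def by blast
  have "(\<lambda>d. 2 * measure (lebesgue_d d) {x \<in> D d. R * sqrt (real d) \<le> edist d x (xs d)}
          + \<bar>R\<bar> * (L d * sqrt (real d))) \<longlonglongrightarrow> 2 * 0 + \<bar>R\<bar> * 0"
    by (intro tendsto_intros lim assms(3))
  hence "eventually (\<lambda>d. 2 * measure (lebesgue_d d) {x \<in> D d. R * sqrt (real d) \<le> edist d x (xs d)}
          + \<bar>R\<bar> * (L d * sqrt (real d)) < \<epsilon>) sequentially"
    using e by (intro order_tendstoD(2)) auto
  then obtain d0 where d0: "\<And>d. d \<ge> d0 \<Longrightarrow> 2 * measure (lebesgue_d d) {x \<in> D d. R * sqrt (real d) \<le> edist d x (xs d)}
          + \<bar>R\<bar> * (L d * sqrt (real d)) < \<epsilon>"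
    unfolding eventually_sequentially by blast
  show "\<exists>d0. \<forall>d\<ge>d0. info_compl \<epsilon> (C0 d (D d) (L d)) d (D d) = 1"
    using one_pt[OF conjunct1[OF D] conjunct2[OF D] xs assms(2)] e d0 by blast
qed

end
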